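(* Let $l$ and $m$ be positive integers, let $n = 2^m-1$, let $\pi : (\mathbb Z_2^m)^* \to \mathbb Z_{n}$ be a bijection, let $q\equiv 1\pmod{2n}$ be a prime power, let $\rho$ be a primitive element of $\mathbb F_q$, let $\Gamma = \operatorname{Cay}(G_{l,m,q},S(\pi))$ and let $v$ be a vertex of $\Gamma$. Then in the subgraph of $\Gamma$ induced on $\Gamma(v)$, every vertex $v+s$ with $s\in S_0$ has valency $2^m l-2$, and for each $g \in (\mathbb Z_2^m)^*$ every vertex $v+s$ with $s\in S_{g,\pi}$ has valency $$\sum_{\substack{h \in (\mathbb Z_2^m)^* \\ h \ne g}} c^n_q\big(\pi(h-g)-\pi(g),\ \pi(h)-\pi(g)\big).$$
   Context: For an additive group $A$, $A^*=A\setminus\{0\}$. $G_{l,m,q} = \mathbb Z_l \oplus \mathbb Z_2^m \oplus \mathbb F_q$. $S_0 = \{(g,0) : g \in (\mathbb Z_l \oplus \mathbb Z_2^m)^*\}$; $S_{z,\pi} = \{(0,z,\rho^j) : j\in\mathbb Z,\ j \equiv \pi(z) \pmod{n}\}$ for $z\in(\mathbb Z_2^m)^*$; $S(\pi) = S_0 \cup \bigcup_z S_{z,\pi}$. $\operatorname{Cay}(G_{l,m,q},S(\pi))$ has vertex set $G_{l,m,q}$, $x\sim y$ iff $y-x\in S(\pi)$; $\Gamma(v)$ is the set of neighbours of $v$. Cyclotomic classes and numbers: write $q = 2nr+1$; for $i \in \mathbb Z_n$, $C^n_q(i) = \{\rho^{nj+i} : 0\le j\le 2r-1\}$, and for $a,b\in\mathbb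 Z_n$, $c^n_q(a,b) = |(C^n_q(a)+1)\cap C^n_q(b)|$ (arithmetic on indices is in $\mathbb Z_n$). *)

theory Defs
  imports "HOL-Number_Theory.Cong" "HOL-Library.Cardinality"
begin

text \<open>Z_2^m is modelled as subsets of {0..<m} (characteristic vectors), with
  addition = symmetric difference; zero = {}.\<close>

definition Z2m :: "nat \<Rightarrow> nat set set" where
  "Z2m m = {z. z \<subseteq> {..<m}}"

definition Z2m_star :: "nat \<Rightarrow> nat set set" where
  "Z2m_star m = Z2m m - {{}}"

definition zadd :: "nat set \<Rightarrow> nat set \<Rightarrow> nat set" where
  "zadd z w = (z - w) \<union> (w - z)"

definition Gset :: "nat \<Rightarrow> nat \<Rightarrow> (int \<times> nat set \<times> 'a) set" where
  "Gset l m = {(a, z, x). 0 \<le> a \<and> a < int l \<and> z \<in> Z2m m}"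

fun gadd :: "nat \<Rightarrow> (int \<times> nat set \<times> 'a::ab_group_add) \<Rightarrow> (int \<times> nat set \<times> 'a) \<Rightarrow> (int \<times> nat set \<times> 'a)" where
  "gadd l (a, z, x) (b, w, y) = ((a + b) mod int l, zadd z w, x + y)"

fun gsub :: "nat \<Rightarrow> (int \<times> nat set \<times> 'a::ab_group_add) \<Rightarrow> (int \<times> nat set \<times> 'a) \<Rightarrow> (int \<times> nat set \<times> 'a)" where
  "gsub l (a, z, x) (b, w, y) = ((a - b) mod int l, zadd z w, x - y)"

definition S0 :: "nat \<Rightarrow> nat \<Rightarrow> (int \<times> nat set \<times> 'a::zero) set" where
  "S0 l m = {(a, z, 0) | a z. 0 \<le> a \<and> a < int l \<and> z \<in> Z2m m \<and> (a, z) \<noteq> (0, {})}"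

definition Szpi :: "nat \<Rightarrow> (nat set \<Rightarrow> nat) \<Rightarrow> 'a::division_ring \<Rightarrow> nat set \<Rightarrow> (int \<times> nat set \<times> 'a) set" where
  "Szpi m \<pi> \<rho> z = {(0, z, \<rho> powi j) | j. [j = int (\<pi> z)] (mod int (2 ^ m - 1))}"

definition Spi :: "nat \<Rightarrow> nat \<Rightarrow> (nat set \<Rightarrow> nat) \<Rightarrow> 'a::division_ring \<Rightarrow> (int \<times> nat set \<times> 'a) set" where
  "Spi l m \<pi> \<rho> = S0 l m \<union> (\<Union>z \<in> Z2m_star m. Szpi m \<pi> \<rho> z)"

definition cay_adj :: "nat \<Rightarrow> nat \<Rightarrow> (nat set \<Rightarrow> nat) \<Rightarrow> 'a::division_ring
    \<Rightarrow> (int \<times> nat set \<times> 'a) \<Rightarrow> (int \<times> nat set \<times> 'a) \<Rightarrow> bool" where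
  "cay_adj l m \<pi> \<rho> x y \<longleftrightarrow> x \<in> Gset l m \<and> y \<in> Gset l m \<and> gsub l y x \<in> Spi l m \<pi> \<rho>"

definition nbhd :: "nat \<Rightarrow> nat \<Rightarrow> (nat set \<Rightarrow> nat) \<Rightarrow> 'a::division_ring
    \<Rightarrow> (int \<times> nat set \<times> 'a) \<Rightarrow> (int \<times> nat set \<times> 'a) set" where
  "nbhd l m \<pi> \<rho> v = {y. cay_adj l m \<pi> \<rho> v y}"

definition induced_deg :: "nat \<Rightarrow> nat \<Rightarrow> (nat set \<Rightarrow> nat) \<Rightarrow> 'a::division_ring
    \<Rightarrow> (int \<times> nat set \<times> 'a) \<Rightarrow> (int \<times> nat set \<times> 'a) \<Rightarrow> nat" where
  "induced_deg l m \<pi> \<rho> v u = card {w \<in> nbhd l m \<pi> \<rho> v. cay_adj l m \<pi> \<rho> u w}"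

definition cyc_class :: "nat \<Rightarrow> 'a::{field,finite} \<Rightarrow> nat \<Rightarrow> 'a set" where
  "cyc_class n \<rho> i = (let r = (CARD('a) - 1) div (2 * n) in {\<rho> ^ (n * j + i) | j. j < 2 * r})"

definition cyc_num :: "nat \<Rightarrow> 'a::{field,finite} \<Rightarrow> nat \<Rightarrow> nat \<Rightarrow> nat" where
  "cyc_num n \<rho> a b = card (((\<lambda>x. x + 1) ` cyc_class n \<rho> a) \<inter> cyc_class n \<rho> b)"

end

theory Submission
  imports Defs
begin


lemma fermat_fin:
  fixes x :: "'a::{field,finite}"
  assumes "x \<noteq> 0"
  shows "x ^ (CARD('a) - 1) = 1"
proof -
  define U where "U = (UNIV::'a set) - {0}"
  have fin: "finite U" by simp
  have cU: "card U = CARD('a) - 1" unfolding U_def by (simp add: card_Diff_singleton)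
  have inj: "inj_on ((*) x) U" using assms by (auto simp: inj_on_def)
  have im: "(*) x ` U = U"
  proof
    show "(*) x ` U \<subseteq> U" using assms by (auto simp: U_def)
    show "U \<subseteq> (*) x ` U"
    proof
      fix y assume "y \<in> U"
      then have "y = x * (y / x)" "y / x \<in> U" using assms by (auto simp: U_def)
      then show "y \<in> (*) x ` U" by blast
    qed
  qed
  have "prod id U = prod id ((*) x ` U)" using im by simp
  also have "\<dots> = prod (\<lambda>y. x * y) U" using prod.reindex[OF inj] by simp
  also have "\<dots> = x ^ card U * prod id U" by (simp add: prod.distrib)
  finally have "prod id U * 1 = prod id U * x ^ card U" by simp
  moreover have "prod id U \<noteq> 0" using fin by (simp add: U_def)
  ultimately have "x ^ card U = 1" by simp
  then show ?thesis using cU by simp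
qed

lemma modsum_iff:
  fixes a b j n :: nat
  assumes "a < n" "b < n" "j < n"
  shows "((a + b) mod n = j) \<longleftrightarrow> (b = (j + n - a) mod n)"
proof (cases "a + b < n")
  case True
  then show ?thesis using assms by (cases "j < a") (auto simp: mod_if)
next
  case False
  then have "(a + b) mod n = a + b - n" using assms by (simp add: mod_if)
  then show ?thesis using assms False by (cases "j < a") (auto simp: mod_if)
qed

locale cycl =
  fixes n :: nat and \<rho> :: "'a::{field,finite}" and NN :: nat
  assumes NN_def: "NN = CARD('a) - 1" and npos: "n > 0" and ndvd: "2 * n dvd NN"
    and gen: "\<forall>x::'a. x \<noteq> 0 \<longrightarrow> (\<exists>k::nat. x = \<rho> ^ k)"
begin


lemma card2: "CARD('a) \<ge> 2"
proof -
  have "card {0::'a, 1} \<le> CARD('a)" by (rule card_mono) auto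
  then show ?thesis by simp
qed

lemma NN_ge: "NN \<ge> 2 * n"
proof -
  have "NN > 0" using card2 NN_def by simp
  then show ?thesis using ndvd by (simp add: dvd_imp_le)
qed

lemma rho_nz: "\<rho> \<noteq> 0"
proof
  assume r0: "\<rho> = 0"
  have "(UNIV::'a set) \<subseteq> {0, 1}"
  proof
    fix x :: 'a
    show "x \<in> {0,1}"
    proof (cases "x = 0")
      case False
      then obtain k where "x = \<rho> ^ k" using gen by blast
      then show ?thesis using r0 by (cases k) auto
    qed simp
  qed
  then have "CARD('a) \<le> 2" by (metis card_2_iff card_mono finite_insert finite.emptyI zero_neq_one)
  then show False using NN_ge npos NN_def by linarith
qed

lemma rho_NN: "\<rho> ^ NN = 1" using fermat_fin rho_nz NN_def by blast

lemma pow_mod: "\<rho> ^ k = \<rho> ^ (k mod NN)"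
proof -
  have "k = k mod NN + NN * (k div NN)" by simp
  then have "\<rho> ^ k = \<rho> ^ (k mod NN) * (\<rho> ^ NN) ^ (k div NN)" by (metis power_add power_mult)
  then show ?thesis by (simp add: rho_NN)
qed

lemma img: "(\<lambda>k. \<rho> ^ k) ` {..<NN} = UNIV - {0}"
proof
  show "(\<lambda>k. \<rho> ^ k) ` {..<NN} \<subseteq> UNIV - {0}" using rho_nz by auto
  show "UNIV - {0} \<subseteq> (\<lambda>k. \<rho> ^ k) ` {..<NN}"
  proof
    fix x assume "x \<in> (UNIV::'a set) - {0}"
    then obtain k where "x = \<rho> ^ k" using gen by blast
    then have "x = \<rho> ^ (k mod NN)" using pow_mod by simp
    moreover have "k mod NN < NN" using NN_ge npos by simp
    ultimately show "x \<in> (\<lambda>k. \<rho> ^ k) ` {..<NN}" by blast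
  qed
qed

lemma inj: "inj_on (\<lambda>k. \<rho> ^ k) {..<NN}"
proof -
  have "card ((\<lambda>k. \<rho> ^ k) ` {..<NN}) = card ((UNIV::'a set) - {0})"
    by (simp only: img)
  also have "\<dots> = card {..<NN}" by (simp add: card_Diff_singleton NN_def)
  finally have "card ((\<lambda>k. \<rho> ^ k) ` {..<NN}) = card {..<NN}" .
  then show ?thesis by (simp add: eq_card_imp_inj_on)
qed

lemma pow_eq_iff: "\<rho> ^ a = \<rho> ^ b \<longleftrightarrow> a mod NN = b mod NN"
proof
  assume "\<rho> ^ a = \<rho> ^ b"
  then have "\<rho> ^ (a mod NN) = \<rho> ^ (b mod NN)" using pow_mod by metis
  moreover have "a mod NN < NN" "b mod NN < NN" using NN_ge npos by auto
  ultimately show "a mod NN = b mod NN" using inj by (auto simp: inj_on_def)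
next
  assume "a mod NN = b mod NN" then show "\<rho> ^ a = \<rho> ^ b" using pow_mod by metis
qed

lemma n_dvd_NN: "n dvd NN" using ndvd by (meson dvd_mult_right)

lemma pow_eq_mod_n: "\<rho> ^ a = \<rho> ^ b \<Longrightarrow> a mod n = b mod n"
  using pow_eq_iff n_dvd_NN by (metis mod_mod_cancel)

definition cls :: "nat \<Rightarrow> 'a set" where
  "cls j = {x. \<exists>k. x = \<rho> ^ k \<and> k mod n = j}"

lemma mem_cls_pow: "\<rho> ^ k \<in> cls j \<longleftrightarrow> k mod n = j"
proof
  assume "\<rho> ^ k \<in> cls j"
  then obtain k' where "\<rho> ^ k = \<rho> ^ k'" "k' mod n = j" unfolding cls_def by blast
  then show "k mod n = j" using pow_eq_mod_n by metis
next
  assume "k mod n = j" then show "\<rho> ^ k \<in> cls j" unfolding cls_def by blast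
qed

lemma cls_nz: "x \<in> cls j \<Longrightarrow> x \<noteq> 0"
  unfolding cls_def using rho_nz by (auto simp del: power_eq_0_iff simp add: power_not_zero)

lemma cls_unique: "x \<in> cls i \<Longrightarrow> x \<in> cls j \<Longrightarrow> i = j"
  unfolding cls_def using pow_eq_mod_n by blast

lemma cls_lt: "x \<in> cls i \<Longrightarrow> i < n"
  unfolding cls_def using npos by auto

lemma cls_mult_iff:
  assumes y0: "y0 \<in> cls i" and j: "j < n"
  shows "y0 * u \<in> cls j \<longleftrightarrow> u \<in> cls ((j + n - i) mod n)"
proof (cases "u = 0")
  case True then show ?thesis using cls_nz by auto
next
  case False
  then obtain f where f: "u = \<rho> ^ f" using gen by blast
  obtain e where e: "y0 = \<rho> ^ e" "e mod n = i" using y0 unfolding cls_def by auto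
  have "y0 * u = \<rho> ^ (e + f)" using e f by (simp add: power_add)
  then have "y0 * u \<in> cls j \<longleftrightarrow> (e mod n + f mod n) mod n = j"
    by (simp add: mem_cls_pow mod_add_eq)
  also have "\<dots> \<longleftrightarrow> f mod n = (j + n - e mod n) mod n"
    by (rule modsum_iff) (use npos j in auto)
  also have "\<dots> \<longleftrightarrow> u \<in> cls ((j + n - i) mod n)" using f e by (simp add: mem_cls_pow)
  finally show ?thesis .
qed

lemma neg_one: "- 1 \<in> cls 0"
proof -
  obtain r where r: "NN = 2 * n * r" using ndvd by blast
  define e where "e = n * r"
  have "NN = e * 2" using r by (simp add: e_def)
  then have "(\<rho> ^ e)\<^sup>2 = 1" using rho_NN by (simp add: power_mult)
  moreover have "\<rho> ^ e \<noteq> \<rho> ^ 0"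
  proof
    assume "\<rho> ^ e = \<rho> ^ 0"
    then have "e mod NN = 0 mod NN" using pow_eq_iff by blast
    moreover have "0 < e" "e < NN" using r NN_ge npos by (auto simp: e_def)
    ultimately show False by simp
  qed
  ultimately have "\<rho> ^ e = - 1" using power2_eq_1_iff by auto
  moreover have "\<rho> ^ e \<in> cls 0" by (simp add: mem_cls_pow e_def)
  ultimately show ?thesis by simp
qed

lemma neg_cls: "y \<in> cls i \<Longrightarrow> - y \<in> cls i"
  using cls_mult_iff[OF neg_one, of i "- y"] cls_lt by auto

lemma nz_cls: "x \<noteq> 0 \<Longrightarrow> \<exists>j. x \<in> cls j"
  using gen unfolding cls_def by blast

lemma cyc_class_eq: "i < n \<Longrightarrow> cyc_class n \<rho> i = cls i"
proof -
  assume i: "i < n"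
  obtain r where r: "NN = 2 * n * r" using ndvd by blast
  have rr: "(CARD('a) - 1) div (2 * n) = r" using r npos NN_def by simp
  show ?thesis
  proof
    show "cyc_class n \<rho> i \<subseteq> cls i" unfolding cyc_class_def Let_def rr
      using i by (auto simp: mem_cls_pow)
    show "cls i \<subseteq> cyc_class n \<rho> i"
    proof
      fix x assume "x \<in> cls i"
      then obtain k where k: "x = \<rho> ^ k" "k mod n = i" unfolding cls_def by auto
      define k' where "k' = k mod NN"
      have x: "x = \<rho> ^ k'" using k pow_mod k'_def by simp
      have "k' mod n = i" using k n_dvd_NN by (simp add: k'_def mod_mod_cancel)
      then have k'e: "k' = n * (k' div n) + i" by (metis div_mult_mod_eq mult.commute)
      have "k' < NN" using NN_ge npos k'_def by simp
      then have "k' div n < 2 * r" using r npos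
        by (metis div_less_iff_less_mult mult.commute mult.left_commute)
      moreover have "x = \<rho> ^ (n * (k' div n) + i)" using x k'e by metis
      ultimately show "x \<in> cyc_class n \<rho> i" unfolding cyc_class_def Let_def rr
        by blast
    qed
  qed
qed

lemma powi_eq: "\<rho> powi j = \<rho> ^ nat (j mod int NN)"
proof -
  have NNp: "int NN > 0" using NN_ge npos by simp
  have e1: "\<rho> powi (int NN * (j div int NN)) = 1"
    by (simp add: power_int_mult rho_NN)
  have "\<rho> powi j = \<rho> powi (j mod int NN + int NN * (j div int NN))" by simp
  also have "\<dots> = \<rho> powi (j mod int NN) * \<rho> powi (int NN * (j div int NN))"
    by (metis power_int_add rho_nz)
  also have "\<dots> = \<rho> powi (j mod int NN)" by (simp only: e1 mult_1_right)
  also have "\<dots> = \<rho> ^ nat (j mod int NN)"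
    using NNp by (metis power_int_of_nat int_nat_eq pos_mod_sign)
  finally show ?thesis .
qed

lemma powi_cls: "i < n \<Longrightarrow> ([j = int i] (mod int n)) \<longleftrightarrow> \<rho> powi j \<in> cls i"
proof -
  assume i: "i < n"
  have NNp: "int NN > 0" using NN_ge npos by simp
  have "\<rho> powi j \<in> cls i \<longleftrightarrow> nat (j mod int NN) mod n = i" by (simp add: powi_eq mem_cls_pow)
  also have "\<dots> \<longleftrightarrow> (j mod int NN) mod int n = int i"
    using NNp by (metis int_nat_eq nat_int of_nat_mod pos_mod_sign)
  also have "\<dots> \<longleftrightarrow> j mod int n = int i"
    using n_dvd_NN by (simp add: mod_mod_cancel)
  also have "\<dots> \<longleftrightarrow> [j = int i] (mod int n)" using i by (simp add: cong_def)
  finally show ?thesis by simp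
qed

end


lemma zadd_Z2m: "z \<in> Z2m m \<Longrightarrow> w \<in> Z2m m \<Longrightarrow> zadd z w \<in> Z2m m"
  by (auto simp: zadd_def Z2m_def)
lemma zadd_empty_iff: "zadd z w = {} \<longleftrightarrow> z = w"
  by (auto simp: zadd_def)
lemma zadd_cancel1: "zadd (zadd z a) (zadd z b) = zadd a b"
  by (auto simp: zadd_def)
lemma zadd_cancel2: "zadd z (zadd w z) = w"
  by (auto simp: zadd_def)
lemma zadd_cancel3: "zadd (zadd z w) z = w"
  by (auto simp: zadd_def)
lemma zadd_eq_self: "zadd w g = g \<longleftrightarrow> w = {}"
  by (auto simp: zadd_def)
lemma zadd_eq_self2: "w = zadd w g \<longleftrightarrow> g = {}"
  by (auto simp: zadd_def)

lemma mod_diff_zero: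
  fixes b c l :: int
  assumes "0 \<le> b" "b < l" "0 \<le> c" "c < l" "(c - b) mod l = 0"
  shows "c = b"
proof (cases "c \<ge> b")
  case True
  then have "(c - b) mod l = c - b" using assms by (simp add: mod_pos_pos_trivial)
  then show ?thesis using assms by simp
next
  case False
  have "(c - b + l) mod l = c - b + l" using assms False by (intro mod_pos_pos_trivial) auto
  moreover have "(c - b + l) mod l = (c - b) mod l" by simp
  ultimately have "(c - b) mod l = c - b + l" by simp
  then show ?thesis using assms False by simp
qed

lemma Gset_mem: "(a, z, x) \<in> Gset l m \<longleftrightarrow> 0 \<le> a \<and> a < int l \<and> z \<in> Z2m m"
  by (simp add: Gset_def)

lemma gadd_in: "l > 0 \<Longrightarrow> v \<in> Gset l m \<Longrightarrow> t \<in> Gset l m \<Longrightarrow> gadd l v t \<in> Gset l m"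
proof -
  assume l: "l > 0" and v: "v \<in> Gset l m" and t: "t \<in> Gset l m"
  obtain a z x where vv: "v = (a, z, x)" by (cases v)
  obtain c w y where tt: "t = (c, w, y)" by (cases t)
  have "0 \<le> a" "a < int l" "z \<in> Z2m m" using v vv by (auto simp: Gset_mem)
  have "0 \<le> c" "c < int l" "w \<in> Z2m m" using t tt by (auto simp: Gset_mem)
  then show ?thesis using l \<open>0 \<le> a\<close> \<open>z \<in> Z2m m\<close> unfolding vv tt by (simp add: Gset_mem zadd_Z2m)
qed

lemma gsub_gadd: "l > 0 \<Longrightarrow> v \<in> Gset l m \<Longrightarrow> t \<in> Gset l m \<Longrightarrow> gsub l (gadd l v t) v = t"
proof -
  assume l: "l > 0" and v: "v \<in> Gset l m" and t: "t \<in> Gset l m"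
  obtain a z x where vv: "v = (a, z, x)" by (cases v)
  obtain c w y where tt: "t = (c, w, y)" by (cases t)
  have c: "0 \<le> c" "c < int l" using t tt by (auto simp: Gset_mem)
  have "((a + c) mod int l - a) mod int l = c mod int l" by (simp add: mod_diff_left_eq)
  also have "\<dots> = c" using c by simp
  finally show ?thesis unfolding vv tt by (simp add: zadd_cancel3)
qed

lemma gadd_gsub: "l > 0 \<Longrightarrow> v \<in> Gset l m \<Longrightarrow> w \<in> Gset l m \<Longrightarrow> gadd l v (gsub l w v) = w"
proof -
  assume l: "l > 0" and v: "v \<in> Gset l m" and t: "w \<in> Gset l m"
  obtain a z x where vv: "v = (a, z, x)" by (cases v)
  obtain c w' y where tt: "w = (c, w', y)" by (cases w)
  have c: "0 \<le> c" "c < int l" using t tt by (auto simp: Gset_mem)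
  have "(a + (c - a) mod int l) mod int l = c mod int l" by (simp add: mod_add_right_eq)
  also have "\<dots> = c" using c by simp
  finally show ?thesis unfolding vv tt by (simp add: zadd_cancel2)
qed

lemma gsub_gadd2: "gsub l (gadd l v t) (gadd l v s) = gsub l t s"
proof -
  obtain a z x where vv: "v = (a, z, x)" by (cases v)
  obtain c w y where tt: "t = (c, w, y)" by (cases t)
  obtain b u e where ss: "s = (b, u, e)" by (cases s)
  have "((a + c) mod int l - (a + b) mod int l) mod int l = (c - b) mod int l"
    by (simp add: mod_diff_eq)
  then show ?thesis unfolding vv tt ss by (simp add: zadd_cancel1)
qed

lemma S0_mem: "(a, z, y) \<in> S0 l m \<longleftrightarrow> y = 0 \<and> 0 \<le> a \<and> a < int l \<and> z \<in> Z2m m \<and> (a, z) \<noteq> (0, {})"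
  unfolding S0_def by blast

lemma Spi_Gset: "l > 0 \<Longrightarrow> Spi l m \<pi> \<rho> \<subseteq> Gset l m"
  by (auto simp: Spi_def S0_def Szpi_def Gset_def Z2m_star_def)

lemma reduce:
  assumes l: "l > 0" and v: "v \<in> Gset l m" and s: "s \<in> Spi l m \<pi> \<rho>"
  shows "induced_deg l m \<pi> \<rho> v (gadd l v s) =
           card {t \<in> Spi l m \<pi> \<rho>. gsub l t s \<in> Spi l m \<pi> \<rho>}"
proof -
  let ?S = "Spi l m \<pi> \<rho>"
  let ?D = "{t \<in> ?S. gsub l t s \<in> ?S}"
  have SG: "?S \<subseteq> Gset l m" using Spi_Gset l by blast
  have sG: "s \<in> Gset l m" using s SG by blast
  have uG: "gadd l v s \<in> Gset l m" using gadd_in l v sG by blast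
  have eq: "{w \<in> nbhd l m \<pi> \<rho> v. cay_adj l m \<pi> \<rho> (gadd l v s) w} = gadd l v ` ?D"
  proof
    show "{w \<in> nbhd l m \<pi> \<rho> v. cay_adj l m \<pi> \<rho> (gadd l v s) w} \<subseteq> gadd l v ` ?D"
    proof
      fix w assume "w \<in> {w \<in> nbhd l m \<pi> \<rho> v. cay_adj l m \<pi> \<rho> (gadd l v s) w}"
      then have wG: "w \<in> Gset l m" and t: "gsub l w v \<in> ?S" and a: "gsub l w (gadd l v s) \<in> ?S"
        by (auto simp: nbhd_def cay_adj_def)
      have w: "w = gadd l v (gsub l w v)" using gadd_gsub l v wG by metis
      have "gsub l (gsub l w v) s \<in> ?S" using a gsub_gadd2[of l v "gsub l w v" s] w by metis
      then show "w \<in> gadd l v ` ?D" using t w by blast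
    qed
    show "gadd l v ` ?D \<subseteq> {w \<in> nbhd l m \<pi> \<rho> v. cay_adj l m \<pi> \<rho> (gadd l v s) w}"
    proof
      fix w assume "w \<in> gadd l v ` ?D"
      then obtain t where t: "t \<in> ?S" "gsub l t s \<in> ?S" and w: "w = gadd l v t" by blast
      have tG: "t \<in> Gset l m" using t SG by blast
      have wG: "w \<in> Gset l m" using w gadd_in l v tG by blast
      have "gsub l w v = t" using w gsub_gadd l v tG by blast
      moreover have "gsub l w (gadd l v s) = gsub l t s" using w gsub_gadd2 by metis
      ultimately show "w \<in> {w \<in> nbhd l m \<pi> \<rho> v. cay_adj l m \<pi> \<rho> (gadd l v s) w}"
        using t wG v uG by (auto simp: nbhd_def cay_adj_def)
    qed
  qed
  have inj: "inj_on (gadd l v) ?D"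
  proof
    fix x y assume "x \<in> ?D" "y \<in> ?D" "gadd l v x = gadd l v y"
    then show "x = y" using gsub_gadd[OF l v] SG by (metis (no_types, lifting) mem_Collect_eq subsetD)
  qed
  show ?thesis unfolding induced_deg_def eq using card_image[OF inj] .
qed



locale setting = cycl n \<rho> NN for n :: nat and \<rho> :: "'a::{field,finite}" and NN +
  fixes l m :: nat and \<pi> :: "nat set \<Rightarrow> nat"
  assumes lpos: "l > 0" and n_def: "n = 2 ^ m - 1"
    and bij: "bij_betw \<pi> (Z2m_star m) {..<n}"
begin

lemma pi_lt: "z \<in> Z2m_star m \<Longrightarrow> \<pi> z < n"
  using bij by (auto simp: bij_betw_def)

lemma pi_inj: "z \<in> Z2m_star m \<Longrightarrow> w \<in> Z2m_star m \<Longrightarrow> \<pi> z = \<pi> w \<Longrightarrow> z = w"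
  using bij by (auto simp: bij_betw_def inj_on_def)

lemma Szpi_mem:
  assumes h: "h \<in> Z2m_star m"
  shows "(a, z, y) \<in> Szpi m \<pi> \<rho> h \<longleftrightarrow> a = 0 \<and> z = h \<and> y \<in> cls (\<pi> h)"
proof
  assume "(a, z, y) \<in> Szpi m \<pi> \<rho> h"
  then obtain j where j: "a = 0" "z = h" "y = \<rho> powi j" "[j = int (\<pi> h)] (mod int (2 ^ m - 1))"
    unfolding Szpi_def by blast
  have "int (2 ^ m - 1) = int n" using n_def by simp
  then have "[j = int (\<pi> h)] (mod int n)" using j(4) by metis
  then have "\<rho> powi j \<in> cls (\<pi> h)" using powi_cls[OF pi_lt[OF h], of j] by blast
  then show "a = 0 \<and> z = h \<and> y \<in> cls (\<pi> h)" using j by blast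
next
  assume A: "a = 0 \<and> z = h \<and> y \<in> cls (\<pi> h)"
  then obtain k where k: "y = \<rho> ^ k" "k mod n = \<pi> h" unfolding cls_def by blast
  have yk: "y = \<rho> powi int k" using k by (simp add: power_int_of_nat)
  have "\<pi> h mod n = \<pi> h" using pi_lt[OF h] by simp
  then have "[k = \<pi> h] (mod n)" using k by (simp add: cong_def)
  then have c1: "[int k = int (\<pi> h)] (mod int n)" by (simp add: cong_int_iff)
  have c2: "[int k = int (\<pi> h)] (mod int (2 ^ m - 1))" using c1 n_def by metis
  show "(a, z, y) \<in> Szpi m \<pi> \<rho> h" using A c2 yk unfolding Szpi_def by blast
qed

lemma Spi_mem: "(a, z, y) \<in> Spi l m \<pi> \<rho> \<longleftrightarrow>
   (a, z, y) \<in> S0 l m \<or> (a = 0 \<and> z \<in> Z2m_star m \<and> y \<in> cls (\<pi> z))"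
proof -
  have "(a, z, y) \<in> Spi l m \<pi> \<rho> \<longleftrightarrow> (a, z, y) \<in> S0 l m \<or> (\<exists>h \<in> Z2m_star m. (a, z, y) \<in> Szpi m \<pi> \<rho> h)"
    unfolding Spi_def by simp
  moreover have "(\<exists>h \<in> Z2m_star m. (a, z, y) \<in> Szpi m \<pi> \<rho> h) \<longleftrightarrow> (a = 0 \<and> z \<in> Z2m_star m \<and> y \<in> cls (\<pi> z))"
  proof
    assume "\<exists>h \<in> Z2m_star m. (a, z, y) \<in> Szpi m \<pi> \<rho> h"
    then obtain h where "h \<in> Z2m_star m" "(a, z, y) \<in> Szpi m \<pi> \<rho> h" by blast
    then show "a = 0 \<and> z \<in> Z2m_star m \<and> y \<in> cls (\<pi> z)" using Szpi_mem[of h a z y] by simp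
  next
    assume "a = 0 \<and> z \<in> Z2m_star m \<and> y \<in> cls (\<pi> z)"
    then have "(a, z, y) \<in> Szpi m \<pi> \<rho> z" using Szpi_mem[of z a z y] by simp
    then show "\<exists>h \<in> Z2m_star m. (a, z, y) \<in> Szpi m \<pi> \<rho> h" using \<open>a = 0 \<and> z \<in> Z2m_star m \<and> y \<in> cls (\<pi> z)\<close> by blast
  qed
  ultimately show ?thesis by blast
qed

lemma Z2m_star_mem: "z \<in> Z2m_star m \<longleftrightarrow> z \<in> Z2m m \<and> z \<noteq> {}"
  unfolding Z2m_star_def by simp

lemma D_S0:
  assumes s: "s \<in> S0 l m"
  shows "{t \<in> Spi l m \<pi> \<rho>. gsub l t s \<in> Spi l m \<pi> \<rho>} = S0 l m - {s}"
proof -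
  obtain b w where sb: "s = (b, w, 0)" "0 \<le> b" "b < int l" "w \<in> Z2m m" "(b, w) \<noteq> (0, {})"
    using s unfolding S0_def by blast
  show ?thesis
  proof (intro set_eqI iffI)
    fix t assume "t \<in> {t \<in> Spi l m \<pi> \<rho>. gsub l t s \<in> Spi l m \<pi> \<rho>}"
    then have tS: "t \<in> Spi l m \<pi> \<rho>" and gS: "gsub l t s \<in> Spi l m \<pi> \<rho>" by auto
    obtain c w' y where tt: "t = (c, w', y)" by (cases t)
    have g: "gsub l t s = ((c - b) mod int l, zadd w' w, y)" unfolding tt sb(1) by simp
    have gS': "((c - b) mod int l, zadd w' w, y) \<in> Spi l m \<pi> \<rho>" using gS unfolding g .
    have tS': "(c, w', y) \<in> Spi l m \<pi> \<rho>" using tS unfolding tt .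
    note gm = Spi_mem[of "(c - b) mod int l" "zadd w' w" y]
    note tm = Spi_mem[of c w' y]
    show "t \<in> S0 l m - {s}"
    proof (cases "(c, w', y) \<in> S0 l m")
      case True
      then have y0: "y = 0" by (simp add: S0_mem)
      have ny: "\<not> y \<in> cls (\<pi> (zadd w' w))" using y0 cls_nz by metis
      then have "((c - b) mod int l, zadd w' w, y) \<in> S0 l m" using gS' gm by metis
      then have "((c - b) mod int l, zadd w' w) \<noteq> (0, {})"
        by (simp add: S0_mem)
      then have "(c, w') \<noteq> (b, w)" by (auto simp: zadd_empty_iff)
      then have "t \<noteq> s" using y0 unfolding tt sb(1) by simp
      then show ?thesis using True tt by simp
    next
      case False
      then have tc: "c = 0" "w' \<in> Z2m_star m" "y \<in> cls (\<pi> w')" using tS' tm by metis+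
      have ynz: "y \<noteq> 0" using tc(3) cls_nz by metis
      then have "((c - b) mod int l, zadd w' w, y) \<notin> S0 l m"
        by (simp add: S0_mem)
      then have gg: "(c - b) mod int l = 0" "zadd w' w \<in> Z2m_star m" "y \<in> cls (\<pi> (zadd w' w))"
        using gS' gm by metis+
      have "\<pi> w' = \<pi> (zadd w' w)" using cls_unique[OF tc(3) gg(3)] .
      then have "w' = zadd w' w" by (rule pi_inj[OF tc(2) gg(2)])
      then have "w = {}" by (simp only: zadd_eq_self2)
      moreover have "b = 0" using mod_diff_zero[of b "int l" 0] gg(1) tc(1) sb(2,3) by simp
      ultimately show ?thesis using sb(5) by simp
    qed
  next
    fix t assume "t \<in> S0 l m - {s}"
    then have tS0: "t \<in> S0 l m" and ts: "t \<noteq> s" by auto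
    obtain c w' y where tt: "t = (c, w', y)" by (cases t)
    have c: "y = 0" "0 \<le> c" "c < int l" "w' \<in> Z2m m" using tS0 unfolding tt by (simp_all add: S0_mem)
    have g: "gsub l t s = ((c - b) mod int l, zadd w' w, 0)" unfolding tt sb(1) c(1) by simp
    have ne: "((c - b) mod int l, zadd w' w) \<noteq> (0, {})"
    proof
      assume "((c - b) mod int l, zadd w' w) = (0, {})"
      then have h1: "(c - b) mod int l = 0" and h2: "zadd w' w = {}" by simp_all
      have "c = b" by (rule mod_diff_zero[OF sb(2,3) c(2,3) h1])
      moreover have "w' = w" using h2 by (simp only: zadd_empty_iff)
      ultimately show False using ts unfolding tt sb(1) c(1) by simp
    qed
    have "0 \<le> (c - b) mod int l" "(c - b) mod int l < int l" using lpos by simp_all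
    moreover have "zadd w' w \<in> Z2m m" using zadd_Z2m c(4) sb(4) .
    ultimately have "((c - b) mod int l, zadd w' w, 0::'a) \<in> S0 l m"
      using ne c sb by (simp add: S0_mem)
    then have "gsub l t s \<in> S0 l m" unfolding g .
    then have "gsub l t s \<in> Spi l m \<pi> \<rho>" unfolding Spi_def by (rule UnI1)
    moreover have "t \<in> Spi l m \<pi> \<rho>" unfolding Spi_def using tS0 by (rule UnI1)
    ultimately show "t \<in> {t \<in> Spi l m \<pi> \<rho>. gsub l t s \<in> Spi l m \<pi> \<rho>}" by simp
  qed
qed

lemma D_Sz:
  assumes g: "g \<in> Z2m_star m" and y0: "y0 \<in> cls (\<pi> g)"
  shows "{t \<in> Spi l m \<pi> \<rho>. gsub l t (0, g, y0) \<in> Spi l m \<pi> \<rho>} =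
    (\<Union>h \<in> Z2m_star m - {g}. (\<lambda>y. (0::int, h, y)) ` {y \<in> cls (\<pi> h). y - y0 \<in> cls (\<pi> (zadd h g))})"
proof (intro set_eqI iffI)
  fix t assume "t \<in> {t \<in> Spi l m \<pi> \<rho>. gsub l t (0, g, y0) \<in> Spi l m \<pi> \<rho>}"
  then have tS: "t \<in> Spi l m \<pi> \<rho>" and gS: "gsub l t (0, g, y0) \<in> Spi l m \<pi> \<rho>" by auto
  obtain c w y where tt: "t = (c, w, y)" by (cases t)
  have ge: "gsub l t (0, g, y0) = (c mod int l, zadd w g, y - y0)" unfolding tt by simp
  have gS': "(c mod int l, zadd w g, y - y0) \<in> Spi l m \<pi> \<rho>" using gS unfolding ge .
  have tS': "(c, w, y) \<in> Spi l m \<pi> \<rho>" using tS unfolding tt .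
  note gm = Spi_mem[of "c mod int l" "zadd w g" "y - y0"]
  note tm = Spi_mem[of c w y]
  have y0nz: "y0 \<noteq> 0" using y0 cls_nz by metis
  show "t \<in> (\<Union>h \<in> Z2m_star m - {g}. (\<lambda>y. (0::int, h, y)) ` {y \<in> cls (\<pi> h). y - y0 \<in> cls (\<pi> (zadd h g))})"
  proof (cases "(c, w, y) \<in> S0 l m")
    case True
    then have cc: "y = 0" "0 \<le> c" "c < int l" "(c, w) \<noteq> (0, {})" by (simp_all add: S0_mem)
    have ny: "y - y0 \<in> cls (\<pi> g)" using neg_cls[OF y0] cc(1) by simp
    then have "y - y0 \<noteq> 0" using cls_nz by metis
    then have "(c mod int l, zadd w g, y - y0) \<notin> S0 l m" by (simp add: S0_mem)
    then have gg: "c mod int l = 0" "zadd w g \<in> Z2m_star m" "y - y0 \<in> cls (\<pi> (zadd w g))"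
      using gS' gm by metis+
    have "\<pi> g = \<pi> (zadd w g)" using cls_unique[OF ny gg(3)] .
    then have "g = zadd w g" by (rule pi_inj[OF g gg(2)])
    then have "w = {}" using zadd_eq_self[of w g] by simp
    moreover have "c = 0" using gg(1) cc(2,3) by simp
    ultimately show ?thesis using cc(4) by simp
  next
    case False
    then have tc: "c = 0" "w \<in> Z2m_star m" "y \<in> cls (\<pi> w)" using tS' tm by metis+
    have wg: "w \<noteq> g"
    proof
      assume "w = g"
      then have "zadd w g = {}" by (simp add: zadd_empty_iff)
      moreover have "c mod int l = 0" using tc(1) by simp
      ultimately have "(0::int, {}::nat set, y - y0) \<in> Spi l m \<pi> \<rho>" using gS' by simp
      then show False by (simp add: Spi_mem S0_mem Z2m_star_mem)
    qed
    have "y \<noteq> y0"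
    proof
      assume "y = y0"
      then have "\<pi> w = \<pi> g" using cls_unique[OF tc(3)] y0 by metis
      then show False using pi_inj[OF tc(2) g] wg by metis
    qed
    then have "y - y0 \<noteq> 0" by simp
    then have "(c mod int l, zadd w g, y - y0) \<notin> S0 l m" by (simp add: S0_mem)
    then have "y - y0 \<in> cls (\<pi> (zadd w g))" using gS' gm by metis
    then have "y \<in> {y \<in> cls (\<pi> w). y - y0 \<in> cls (\<pi> (zadd w g))}" using tc(3) by simp
    moreover have "w \<in> Z2m_star m - {g}" using tc(2) wg by simp
    moreover have "t = (0, w, y)" using tt tc(1) by simp
    ultimately show ?thesis by blast
  qed
next
  fix t assume "t \<in> (\<Union>h \<in> Z2m_star m - {g}. (\<lambda>y. (0::int, h, y)) ` {y \<in> cls (\<pi> h). y - y0 \<in> cls (\<pi> (zadd h g))})"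
  then obtain h y where h: "h \<in> Z2m_star m" "h \<noteq> g" and y: "y \<in> cls (\<pi> h)" "y - y0 \<in> cls (\<pi> (zadd h g))"
    and tt: "t = (0, h, y)" by blast
  have "(0::int, h, y) \<in> Spi l m \<pi> \<rho>" using h y by (simp add: Spi_mem)
  then have tS: "t \<in> Spi l m \<pi> \<rho>" using tt by simp
  have ge: "gsub l t (0, g, y0) = (0, zadd h g, y - y0)" unfolding tt by simp
  have "zadd h g \<in> Z2m_star m" using h g zadd_Z2m zadd_empty_iff by (simp add: Z2m_star_mem)
  then have "(0::int, zadd h g, y - y0) \<in> Spi l m \<pi> \<rho>" using y by (simp add: Spi_mem)
  then have "gsub l t (0, g, y0) \<in> Spi l m \<pi> \<rho>" unfolding ge .
  then show "t \<in> {t \<in> Spi l m \<pi> \<rho>. gsub l t (0, g, y0) \<in> Spi l m \<pi> \<rho>}" using tS by simp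
qed

lemma card_Y:
  assumes g: "g \<in> Z2m_star m" and y0: "y0 \<in> cls (\<pi> g)" and h: "h \<in> Z2m_star m" "h \<noteq> g"
  shows "card {y \<in> cls (\<pi> h). y - y0 \<in> cls (\<pi> (zadd h g))} =
    cyc_num n \<rho> ((\<pi> (zadd h g) + n - \<pi> g) mod n) ((\<pi> h + n - \<pi> g) mod n)"
proof -
  define a where "a = (\<pi> (zadd h g) + n - \<pi> g) mod n"
  define b where "b = (\<pi> h + n - \<pi> g) mod n"
  have hg: "zadd h g \<in> Z2m_star m" using h g zadd_Z2m zadd_empty_iff by (simp add: Z2m_star_mem)
  have an: "a < n" "b < n" using npos by (simp_all add: a_def b_def)
  have y0nz: "y0 \<noteq> 0" using y0 cls_nz by metis
  define U where "U = {u \<in> cls b. u - 1 \<in> cls a}"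
  have cn: "cyc_num n \<rho> a b = card U"
  proof -
    have "((\<lambda>x. x + 1) ` cyc_class n \<rho> a) \<inter> cyc_class n \<rho> b = U"
    proof (intro set_eqI iffI)
      fix x assume "x \<in> ((\<lambda>x. x + 1) ` cyc_class n \<rho> a) \<inter> cyc_class n \<rho> b"
      then show "x \<in> U" using cyc_class_eq an unfolding U_def by auto
    next
      fix x assume x: "x \<in> U"
      then have "x = (x - 1) + 1" "x - 1 \<in> cyc_class n \<rho> a" "x \<in> cyc_class n \<rho> b"
        using cyc_class_eq an unfolding U_def by auto
      then show "x \<in> ((\<lambda>x. x + 1) ` cyc_class n \<rho> a) \<inter> cyc_class n \<rho> b" by blast
    qed
    then show ?thesis unfolding cyc_num_def by simp
  qed
  have eq: "{y \<in> cls (\<pi> h). y - y0 \<in> cls (\<pi> (zadd h g))} = (\<lambda>u. y0 * u) ` U"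
  proof (intro set_eqI iffI)
    fix y assume "y \<in> {y \<in> cls (\<pi> h). y - y0 \<in> cls (\<pi> (zadd h g))}"
    then have y1: "y \<in> cls (\<pi> h)" and y2: "y - y0 \<in> cls (\<pi> (zadd h g))" by auto
    define u where "u = y / y0"
    have yu: "y = y0 * u" using y0nz by (simp add: u_def)
    have "y0 * u \<in> cls (\<pi> h)" using y1 yu by simp
    then have "u \<in> cls b" using cls_mult_iff[OF y0 pi_lt[OF h(1)]] by (simp add: b_def)
    moreover have "y0 * (u - 1) \<in> cls (\<pi> (zadd h g))" using y2 yu by (simp add: algebra_simps)
    then have "u - 1 \<in> cls a" using cls_mult_iff[OF y0 pi_lt[OF hg]] by (simp add: a_def)
    ultimately show "y \<in> (\<lambda>u. y0 * u) ` U" using yu unfolding U_def by blast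
  next
    fix y assume "y \<in> (\<lambda>u. y0 * u) ` U"
    then obtain u where u: "u \<in> cls b" "u - 1 \<in> cls a" and yu: "y = y0 * u" unfolding U_def by blast
    have "y0 * u \<in> cls (\<pi> h)" using u(1) cls_mult_iff[OF y0 pi_lt[OF h(1)]] by (simp add: b_def)
    moreover have "y0 * (u - 1) \<in> cls (\<pi> (zadd h g))"
      using u(2) cls_mult_iff[OF y0 pi_lt[OF hg]] by (simp add: a_def)
    ultimately show "y \<in> {y \<in> cls (\<pi> h). y - y0 \<in> cls (\<pi> (zadd h g))}"
      using yu by (simp add: algebra_simps)
  qed
  have inj: "inj_on (\<lambda>u. y0 * u) U" using y0nz by (auto simp: inj_on_def)
  show ?thesis unfolding eq card_image[OF inj] cn[unfolded a_def b_def, symmetric] ..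
qed

lemma card_D_Sz:
  assumes g: "g \<in> Z2m_star m" and y0: "y0 \<in> cls (\<pi> g)"
  shows "card {t \<in> Spi l m \<pi> \<rho>. gsub l t (0, g, y0) \<in> Spi l m \<pi> \<rho>} =
    (\<Sum>h \<in> Z2m_star m - {g}. cyc_num n \<rho> ((\<pi> (zadd h g) + n - \<pi> g) mod n) ((\<pi> h + n - \<pi> g) mod n))"
proof -
  have finH: "finite (Z2m_star m - {g})"
  proof -
    have "Z2m_star m \<subseteq> Pow {..<m}" by (auto simp: Z2m_star_def Z2m_def)
    then show ?thesis by (meson finite_Diff finite_Pow_iff finite_lessThan finite_subset)
  qed
  let ?A = "\<lambda>h. (\<lambda>y. (0::int, h, y)) ` {y \<in> cls (\<pi> h). y - y0 \<in> cls (\<pi> (zadd h g))}"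
  have "card (\<Union>h \<in> Z2m_star m - {g}. ?A h) = (\<Sum>h \<in> Z2m_star m - {g}. card (?A h))"
    by (rule card_UN_disjoint[OF finH]) auto
  also have "\<dots> = (\<Sum>h \<in> Z2m_star m - {g}. card {y \<in> cls (\<pi> h). y - y0 \<in> cls (\<pi> (zadd h g))})"
    by (intro sum.cong refl card_image) (auto simp: inj_on_def)
  also have "\<dots> = (\<Sum>h \<in> Z2m_star m - {g}. cyc_num n \<rho> ((\<pi> (zadd h g) + n - \<pi> g) mod n) ((\<pi> h + n - \<pi> g) mod n))"
    by (intro sum.cong refl card_Y[OF g y0]) auto
  finally show ?thesis unfolding D_Sz[OF g y0] .
qed

lemma card_S0: "card (S0 l m :: (int \<times> nat set \<times> 'a) set) = l * 2 ^ m - 1"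
proof -
  have e: "(S0 l m :: (int \<times> nat set \<times> 'a) set) = (\<lambda>(a, z). (a, z, 0::'a)) ` ({0..<int l} \<times> Pow {..<m} - {(0, {})})"
    unfolding S0_def Z2m_def by auto
  have inj: "inj_on (\<lambda>(a, z). (a, z, 0::'a)) ({0..<int l} \<times> Pow {..<m} - {(0, {})})"
    by (auto simp: inj_on_def)
  have "(0::int, {}::nat set) \<in> {0..<int l} \<times> Pow {..<m}" using lpos by simp
  then have "card ({0..<int l} \<times> Pow {..<m} - {(0::int, {}::nat set)}) = l * 2 ^ m - 1"
    by (simp add: card_Diff_singleton card_cartesian_product card_Pow)
  then show ?thesis unfolding e card_image[OF inj] .
qed

end

theorem lemma2p3:
  fixes l m q :: nat and \<pi> :: "nat set \<Rightarrow> nat" and \<rho> :: "'a::{field,finite}"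
    and v :: "int \<times> nat set \<times> 'a"
  assumes "l > 0" and "m > 0"
    and "bij_betw \<pi> (Z2m_star m) {..<2 ^ m - 1}"
    and "CARD('a) = q" and "[q = 1] (mod 2 * (2 ^ m - 1))"
    and "\<forall>x::'a. x \<noteq> 0 \<longrightarrow> (\<exists>k::nat. x = \<rho> ^ k)"
    and "v \<in> Gset l m"
  shows "(\<forall>s \<in> S0 l m. induced_deg l m \<pi> \<rho> v (gadd l v s) = 2 ^ m * l - 2)
       \<and> (\<forall>g \<in> Z2m_star m. \<forall>s \<in> Szpi m \<pi> \<rho> g.
            induced_deg l m \<pi> \<rho> v (gadd l v s) =
              (\<Sum>h \<in> Z2m_star m - {g}.
                 cyc_num (2 ^ m - 1) \<rho>
                   ((\<pi> (zadd h g) + (2 ^ m - 1) - \<pi> g) mod (2 ^ m - 1))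
                   ((\<pi> h + (2 ^ m - 1) - \<pi> g) mod (2 ^ m - 1))))"
proof -
  note A = assms
  define n where "n = (2::nat) ^ m - 1"
  have "(2::nat) ^ m \<ge> 2 ^ 1" using A(2) by (intro power_increasing) auto
  then have npos: "n > 0" unfolding n_def by simp
  have "CARD('a) \<ge> 1" by (simp add: Suc_leI)
  then have ndvd: "2 * n dvd CARD('a) - 1"
    using A(4,5) cong_altdef_nat[of 1 q "2 * n"] unfolding n_def by simp
  interpret S: setting n \<rho> "CARD('a) - 1" l m \<pi>
    by unfold_locales (use npos ndvd A in \<open>simp_all add: n_def\<close>)
  have part1: "\<forall>s \<in> S0 l m. induced_deg l m \<pi> \<rho> v (gadd l v s) = 2 ^ m * l - 2"
  proof
    fix s :: "int \<times> nat set \<times> 'a" assume s: "s \<in> S0 l m"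
    then have sS: "s \<in> Spi l m \<pi> \<rho>" unfolding Spi_def by (rule UnI1)
    have cS0: "card (S0 l m :: (int \<times> nat set \<times> 'a) set) = l * 2 ^ m - 1" by (rule S.card_S0)
    have "l * 2 ^ m \<ge> 1 * 2" using A(1) \<open>2 ^ m \<ge> 2 ^ 1\<close> by (intro mult_mono) auto
    then have "card (S0 l m :: (int \<times> nat set \<times> 'a) set) > 0" using cS0 by simp
    then have fin: "finite (S0 l m :: (int \<times> nat set \<times> 'a) set)" using card_ge_0_finite by blast
    have "induced_deg l m \<pi> \<rho> v (gadd l v s) = card {t \<in> Spi l m \<pi> \<rho>. gsub l t s \<in> Spi l m \<pi> \<rho>}"
      by (rule reduce[OF A(1) A(7) sS])
    also have "\<dots> = card (S0 l m - {s})" using S.D_S0[OF s] by simp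
    also have "\<dots> = l * 2 ^ m - 1 - 1" using card_Diff_singleton[OF s] cS0 by simp
    finally show "induced_deg l m \<pi> \<rho> v (gadd l v s) = 2 ^ m * l - 2" by (simp add: mult.commute)
  qed
  have part2: "\<forall>g \<in> Z2m_star m. \<forall>s \<in> Szpi m \<pi> \<rho> g.
            induced_deg l m \<pi> \<rho> v (gadd l v s) =
              (\<Sum>h \<in> Z2m_star m - {g}. cyc_num n \<rho>
                   ((\<pi> (zadd h g) + n - \<pi> g) mod n) ((\<pi> h + n - \<pi> g) mod n))"
  proof (intro ballI)
    fix g s assume g: "g \<in> Z2m_star m" and s: "s \<in> Szpi m \<pi> \<rho> g"
    obtain a z y where ss: "s = (a, z, y)" by (cases s)
    have "a = 0 \<and> z = g \<and> y \<in> S.cls (\<pi> g)" using s unfolding ss using S.Szpi_mem[OF g] by metis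
    then have ss2: "s = (0, g, y)" and y: "y \<in> S.cls (\<pi> g)" using ss by auto
    have sS: "s \<in> Spi l m \<pi> \<rho>" unfolding Spi_def using g s by blast
    have "induced_deg l m \<pi> \<rho> v (gadd l v s) = card {t \<in> Spi l m \<pi> \<rho>. gsub l t s \<in> Spi l m \<pi> \<rho>}"
      by (rule reduce[OF A(1) A(7) sS])
    also have "\<dots> = (\<Sum>h \<in> Z2m_star m - {g}. cyc_num n \<rho>
                   ((\<pi> (zadd h g) + n - \<pi> g) mod n) ((\<pi> h + n - \<pi> g) mod n))"
      unfolding ss2 by (rule S.card_D_Sz[OF g y])
    finally show "induced_deg l m \<pi> \<rho> v (gadd l v s) = (\<Sum>h \<in> Z2m_star m - {g}. cyc_num n \<rho>
                   ((\<pi> (zadd h g) + n - \<pi> g) mod n) ((\<pi> h + n - \<pi> g) mod n))" .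
  qed
  show ?thesis using part1 part2 unfolding n_def by blast
qed

end
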